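(* Assume the standing setting and let $\epsilon>0$. If $|u^0_i-u^0_{i+1}|\le \epsilon/3^{M}$ for all $i\in\mathbb Z$, then for every coarse index $j$, $|v_r-u_r|\le\epsilon$, i.e. $|w^N_{j+1}-u^M_{(j+1)r}|\le\epsilon$.
   Context: Standing setting. Let $F:\mathbb R\to\mathbb R$ be continuously differentiable. For a spatial step $\eta>0$, a time step $\tau>0$ and an initial sequence $(z^0_i)_{i\in\mathbb Z}$ of reals, the EFC (Euler forward in time, centered in space) scheme produces $(z^n_i)_{i\in\mathbb Z,\,n\in\mathbb N}$ by $z^{n+1}_i=z^n_i-F'(z^n_i)\frac{\tau}{2\eta}\,(z^n_{i+1}-z^n_{i-1})$. It satisfies the CFL condition if $|F'(z^n_i)|\,\tau/\eta\le 1$ for all $i\in\mathbb Z$, $n\in\mathbb N$. Fix $a\in\mathbb R$, $h>0$, $\Delta t>0$, an integer $N>1$ and an even integer $r\ge 2$; put $k=h/r$, $dt=\Delta t/r$, $M=Nr$. Let $u_0:\mathbb R\to\mathbb R$. The coarse solution $(w^n_j)$ is the EFC scheme with $\eta=h$, $\tau=\Delta t$, $w^0_j=u_0(a+jh)$; the fine solution $(u^n_i)$ is the EFC scheme with $\eta=k$, $\tau=dt$, $u^0_i=u_0(a+ik)$ (so $w^0_j=u^0_{jr}$). Both are assumed to satisfy the CFL condition. Coarse nodes: $x_j=a+jh$. Interpolant: for a fixed coarse index $j$, set $p_1=x_j$, $p_2=x_{j+1}$, $d_1=w^N_j$, $d_2=w^N_{j+1}$, let $q$ be the cubic with $q(0)=p_1$,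 $q(1)=p_2$, $q'(0)=d_1$, $q'(1)=d_2$, and let $v(t)=q'(t)=(6p_1-6p_2+3d_1+3d_2)t^2+(-6p_1+6p_2-4d_1-2d_2)t+d_1$ for $t\in[0,1]$. For $0\le m\le r$ put $v_m=v(m/r)$ and $u_m=u^M_{jr+m}$ (the fine solution at time step $M$ at the fine node $x_j+mk$). *)

theory Defs
  imports Complex_Main
begin

text \<open>EFC scheme (Euler forward in time, centered in space). Fd is the derivative F'
  of the flux, eta the spatial step, tau the time step, z0 the initial sequence.
  efc Fd eta tau z0 n i is z^n_i.\<close>
primrec efc :: "(real \<Rightarrow> real) \<Rightarrow> real \<Rightarrow> real \<Rightarrow> (int \<Rightarrow> real) \<Rightarrow> nat \<Rightarrow> int \<Rightarrow> real" where
  "efc Fd eta tau z0 0 = z0"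
| "efc Fd eta tau z0 (Suc n) =
     (\<lambda>i. efc Fd eta tau z0 n i
          - Fd (efc Fd eta tau z0 n i) * (tau / (2 * eta))
              * (efc Fd eta tau z0 n (i + 1) - efc Fd eta tau z0 n (i - 1)))"

definition efc_cfl :: "(real \<Rightarrow> real) \<Rightarrow> real \<Rightarrow> real \<Rightarrow> (int \<Rightarrow> real) \<Rightarrow> bool" where
  "efc_cfl Fd eta tau z0 \<longleftrightarrow>
     (\<forall>n i. \<bar>Fd (efc Fd eta tau z0 n i)\<bar> * tau / eta \<le> 1)"

text \<open>Derivative v = q' of the cubic Hermite interpolant q.\<close>
definition herm_v :: "real \<Rightarrow> real \<Rightarrow> real \<Rightarrow> real \<Rightarrow> real \<Rightarrow> real" where
  "herm_v p1 p2 d1 d2 t =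
     (6*p1 - 6*p2 + 3*d1 + 3*d2) * t^2 + (-6*p1 + 6*p2 - 4*d1 - 2*d2) * t + d1"

end

theory Submission
  imports Defs
begin

lemma efc_coef:
  assumes "efc_cfl Fd eta tau z0" "eta > 0" "tau > 0"
  shows "\<bar>Fd (efc Fd eta tau z0 n i) * (tau / (2 * eta))\<bar> \<le> 1/2"
proof -
  have "\<bar>Fd (efc Fd eta tau z0 n i)\<bar> * tau / eta \<le> 1"
    using assms(1) unfolding efc_cfl_def by blast
  moreover have "\<bar>Fd (efc Fd eta tau z0 n i) * (tau / (2 * eta))\<bar>
      = (\<bar>Fd (efc Fd eta tau z0 n i)\<bar> * tau / eta) / 2"
    using assms(2,3) by (simp add: abs_mult)
  ultimately show ?thesis by simp
qed

lemma efc_diff: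
  assumes "efc_cfl Fd eta tau z0" "eta > 0" "tau > 0"
    and "\<forall>i. \<bar>z0 (i+1) - z0 i\<bar> \<le> D"
  shows "\<forall>i. \<bar>efc Fd eta tau z0 n (i+1) - efc Fd eta tau z0 n i\<bar> \<le> 3^n * D"
proof (induction n)
  case 0
  then show ?case using assms(4) by simp
next
  case (Suc n)
  show ?case
  proof
    fix i :: int
    define z where "z = efc Fd eta tau z0 n"
    define c where "c = (\<lambda>i. Fd (z i) * (tau / (2 * eta)))"
    have c: "\<bar>c k\<bar> \<le> 1/2" for k unfolding c_def z_def using efc_coef[OF assms(1-3)] by blast
    have d: "\<bar>z (k+1) - z k\<bar> \<le> 3^n * D" for k using Suc z_def by blast
    have e: "efc Fd eta tau z0 (Suc n) k = z k - c k * (z (k+1) - z (k-1))" for k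
      by (simp add: z_def c_def)
    have d2: "\<bar>z (k+1) - z (k - 1)\<bar> \<le> 2 * 3^n * D" for k
      using d[of k] d[of "k-1"] by simp
    have t1: "\<bar>c (i+1) * (z (i+1+1) - z (i+1-1))\<bar> \<le> 1/2 * (2 * 3^n * D)"
      unfolding abs_mult by (rule mult_mono[OF c d2]) auto
    have t2: "\<bar>c i * (z (i+1) - z (i-1))\<bar> \<le> 1/2 * (2 * 3^n * D)"
      unfolding abs_mult by (rule mult_mono[OF c d2]) auto
    have "\<bar>efc Fd eta tau z0 (Suc n) (i+1) - efc Fd eta tau z0 (Suc n) i\<bar>
        = \<bar>(z (i+1) - z i) - c (i+1) * (z (i+1+1) - z (i+1-1)) + c i * (z (i+1) - z (i-1))\<bar>"
      unfolding e by simp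
    also have "\<dots> \<le> 3^n * D + 1/2 * (2 * 3^n * D) + 1/2 * (2 * 3^n * D)"
      using d[of i] t1 t2 by linarith
    also have "\<dots> = 3^Suc n * D" by simp
    finally show "\<bar>efc Fd eta tau z0 (Suc n) (i+1) - efc Fd eta tau z0 (Suc n) i\<bar> \<le> 3^Suc n * D" .
  qed
qed

lemma efc_drift:
  assumes "efc_cfl Fd eta tau z0" "eta > 0" "tau > 0"
    and "\<forall>i. \<bar>z0 (i+1) - z0 i\<bar> \<le> D"
  shows "\<bar>efc Fd eta tau z0 n i - z0 i\<bar> \<le> (3^n - 1) / 2 * D"
proof (induction n)
  case 0
  then show ?case by simp
next
  case (Suc n)
  define z where "z = efc Fd eta tau z0 n"
  define c where "c = (\<lambda>i. Fd (z i) * (tau / (2 * eta)))"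
  have c: "\<bar>c k\<bar> \<le> 1/2" for k unfolding c_def z_def using efc_coef[OF assms(1-3)] by blast
  have d: "\<bar>z (k+1) - z k\<bar> \<le> 3^n * D" for k using efc_diff[OF assms] z_def by blast
  have d2: "\<bar>z (k+1) - z (k - 1)\<bar> \<le> 2 * 3^n * D" for k
    using d[of k] d[of "k-1"] by simp
  have t2: "\<bar>c i * (z (i+1) - z (i-1))\<bar> \<le> 1/2 * (2 * 3^n * D)"
    unfolding abs_mult by (rule mult_mono[OF c d2]) auto
  have e: "efc Fd eta tau z0 (Suc n) i = z i - c i * (z (i+1) - z (i-1))"
    by (simp add: z_def c_def)
  have "\<bar>efc Fd eta tau z0 (Suc n) i - z0 i\<bar> \<le> (3^n - 1) / 2 * D + 3^n * D"
    using Suc[folded z_def] t2 unfolding e by linarith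
  also have "\<dots> = (3^Suc n - 1) / 2 * D" by (simp add: field_simps)
  finally show ?case .
qed

lemma tele:
  assumes "\<forall>i. \<bar>z0 (i+1) - z0 i\<bar> \<le> (D::real)"
  shows "\<bar>z0 (i + int m) - z0 i\<bar> \<le> real m * D"
proof (induction m)
  case 0 then show ?case by simp
next
  case (Suc m)
  have "\<bar>z0 (i + int m + 1) - z0 (i + int m)\<bar> \<le> D" using assms by blast
  then have "\<bar>z0 (i + int m + 1) - z0 i\<bar> \<le> real m * D + D" using Suc by linarith
  then show ?case by (simp add: algebra_simps)
qed

lemma pow_ineq: "real r * (3 ^ N - 1) \<le> 3 ^ (N * r) + (1::real)" if "r \<ge> 2" "N \<ge> 1" for r N :: nat
proof -
  have a: "r \<le> 3 ^ (r - 1)" using that(1)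
  proof (induction r rule: nat_induct_at_least)
    case base then show ?case by simp
  next
    case (Suc n) then show ?case by (cases n) auto
  qed
  have b: "(3::nat) ^ (r-1) \<le> 3 ^ (N * (r - 1))"
  proof (rule power_increasing)
    show "r - 1 \<le> N * (r - 1)" using that by simp
  qed simp
  have ab: "r \<le> 3 ^ (N * (r-1))" using a b by linarith
  have "r * 3 ^ N \<le> 3 ^ (N * (r-1)) * 3 ^ N" using ab by (rule mult_right_mono) simp
  also have "\<dots> = 3 ^ (N * r)" using that
    by (metis (no_types) Suc_diff_1 mult_Suc_right add.commute power_add not_numeral_le_zero
        le_numeral_extra(1) order_trans less_one not_less)
  finally have "real (r * 3 ^ N) \<le> real (3 ^ (N * r))" by linarith
  then show ?thesis by (simp add: algebra_simps)
qed

theorem proposition8: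
  fixes F F' :: "real \<Rightarrow> real"
    and a h \<Delta>t \<epsilon> :: real
    and N r :: nat
    and u0 :: "real \<Rightarrow> real"
  assumes F_deriv: "\<forall>x. (F has_real_derivative F' x) (at x)"
    and F'_cont: "continuous_on UNIV F'"
    and h_pos: "h > 0" and dt_pos: "\<Delta>t > 0"
    and N_gt: "N > 1" and r_even: "even r" and r_ge: "r \<ge> 2"
    and cfl_coarse: "efc_cfl F' h \<Delta>t (\<lambda>j. u0 (a + real_of_int j * h))"
    and cfl_fine: "efc_cfl F' (h / real r) (\<Delta>t / real r) (\<lambda>i. u0 (a + real_of_int i * (h / real r)))"
    and eps_pos: "\<epsilon> > 0"
    and small: "\<forall>i::int. \<bar>u0 (a + real_of_int i * (h / real r)) - u0 (a + real_of_int (i + 1) * (h / real r))\<bar>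
                   \<le> \<epsilon> / 3 ^ (N * r)"
  shows "\<forall>j::int.
     (let w = efc F' h \<Delta>t (\<lambda>j. u0 (a + real_of_int j * h));
          u = efc F' (h / real r) (\<Delta>t / real r) (\<lambda>i. u0 (a + real_of_int i * (h / real r)));
          x = (\<lambda>j::int. a + real_of_int j * h);
          v = herm_v (x j) (x (j + 1)) (w N j) (w N (j + 1))
      in \<bar>v (real r / real r) - u (N * r) (j * int r + int r)\<bar> \<le> \<epsilon>
         \<and> \<bar>w N (j + 1) - u (N * r) ((j + 1) * int r)\<bar> \<le> \<epsilon>)"
proof
  fix j :: int
  define D where "D = \<epsilon> / 3 ^ (N * r)"
  define w0 where "w0 = (\<lambda>j::int. u0 (a + real_of_int j * h))"
  define u0' where "u0' = (\<lambda>i::int. u0 (a + real_of_int i * (h / real r)))"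
  define w where "w = efc F' h \<Delta>t w0"
  define u where "u = efc F' (h / real r) (\<Delta>t / real r) u0'"
  have rpos: "real r > 0" using r_ge by simp
  have D0: "D \<ge> 0" using eps_pos unfolding D_def by simp
  have fd: "\<forall>i. \<bar>u0' (i+1) - u0' i\<bar> \<le> D"
    using small unfolding u0'_def D_def by (metis abs_minus_commute)
  have w0u: "w0 k = u0' (k * int r)" for k
    unfolding w0_def u0'_def using rpos by simp
  have cd: "\<forall>k. \<bar>w0 (k+1) - w0 k\<bar> \<le> real r * D"
  proof
    fix k
    have "\<bar>u0' (k * int r + int r) - u0' (k * int r)\<bar> \<le> real r * D" by (rule tele[OF fd])
    then show "\<bar>w0 (k+1) - w0 k\<bar> \<le> real r * D" unfolding w0u by (simp add: algebra_simps)
  qed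
  have A: "\<bar>w N (j+1) - w0 (j+1)\<bar> \<le> (3^N - 1)/2 * (real r * D)"
    unfolding w_def by (rule efc_drift[OF cfl_coarse[folded w0_def] h_pos dt_pos cd])
  have B: "\<bar>u (N*r) ((j+1) * int r) - u0' ((j+1) * int r)\<bar> \<le> (3^(N*r) - 1)/2 * D"
    unfolding u_def
    by (rule efc_drift[OF cfl_fine[folded u0'_def] _ _ fd]) (use h_pos dt_pos rpos in auto)
  have P: "real r * (3 ^ N - 1) \<le> 3 ^ (N * r) + (1::real)" using pow_ineq r_ge N_gt by simp
  have "(3^N - 1)/2 * (real r * D) + (3^(N*r) - 1)/2 * D \<le> 3^(N*r) * D"
  proof -
    have "(3^N - 1)/2 * (real r * D) + (3^(N*r) - 1)/2 * D
        = (real r * (3^N - 1) + 3^(N*r) - 1) / 2 * D" by (simp add: field_simps)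
    also have "\<dots> \<le> (2 * 3^(N*r)) / 2 * D"
      using P D0 by (intro mult_right_mono divide_right_mono) auto
    finally show ?thesis by simp
  qed
  also have "3^(N*r) * D = \<epsilon>" unfolding D_def by simp
  finally have main: "\<bar>w N (j + 1) - u (N * r) ((j + 1) * int r)\<bar> \<le> \<epsilon>"
    using A B w0u[of "j+1"] by linarith
  have hv: "herm_v p1 p2 d1 d2 1 = d2" for p1 p2 d1 d2
    unfolding herm_v_def by simp
  show "let w = efc F' h \<Delta>t (\<lambda>j. u0 (a + real_of_int j * h));
          u = efc F' (h / real r) (\<Delta>t / real r) (\<lambda>i. u0 (a + real_of_int i * (h / real r)));
          x = (\<lambda>j::int. a + real_of_int j * h);
          v = herm_v (x j) (x (j + 1)) (w N j) (w N (j + 1))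
      in \<bar>v (real r / real r) - u (N * r) (j * int r + int r)\<bar> \<le> \<epsilon>
         \<and> \<bar>w N (j + 1) - u (N * r) ((j + 1) * int r)\<bar> \<le> \<epsilon>"
    using main rpos unfolding Let_def w_def u_def w0_def u0'_def hv
    by (simp add: hv algebra_simps)
qed

end
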